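(* Let $\Gamma$ be a scale on $\overline{\mathcal N}$ such that $\Gamma(x,\cdot)$ is continuous for every $x\in\overline{\mathcal N}$. Let $G$ denote the group $F(\mathcal N)$ equipped with the left-invariant metric $\delta_\Gamma$. Then for every $w\in\overline{\mathcal N}$ (viewed as an element of $F(\mathcal N)$) and every $r\in\mathbb R_+$, $\Gamma_G(w,r)\le\Gamma(w,r)$.
   Context: Free groups: for a nonempty set $X$, let $X^{-1}=\{x^{-1}:x\in X\}$ be a disjoint copy of $X$ and $e\notin X\cup X^{-1}$ a new symbol; put $\overline{X}=X\cup X^{-1}\cup\{e\}$, with $(x^{-1})^{-1}=x$ and $e^{-1}=e$. $W(X)$ is the set of nonempty finite words over $\overline X$, $|w|$ the length of $w$. A word is irreducible if it is $e$ or $x_0\cdots x_n$ with all $x_i\ne e$ and $x_i\ne x_{i+1}^{-1}$. The reduced word $w'$ of $w\in W(X)$ is obtained by repeatedly replacing occurrences of $xx^{-1}$ by $e$ and deleting $e$ from $w_1ew_2$ when $w_1$ or $w_2$ is nonempty. $F(X)$ is the set of irreducible words with product $u\cdot v=(u^\frown v)'$; it is the free group on $X$ with identity $e$. Metric on $\overline X$: if $d\le 1$ is a metric on $X$, extend it to $\overline X$ by $d(x^{-1},y^{-1})=d(x,y)$ and $d(x^{-1},y)=d(x,e)=d(x^{-1},e)=1$ for $x,y\in X$ (symmetric, $d(e,e)=0$). Match: for $m\le n$, a bijection $\theta$ of $\{m,\dots,n\}$ with $\theta^2=\mathrm{id}$ and no $i<j<\theta(i)<\theta(j)$. Scale: $\Gamma:\overline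 X\times\mathbb{R}_+\to\mathbb{R}_+$ such that for all $x\in\overline X$, $r\in\mathbb{R}_+$: (i) $\Gamma(e,r)=r$ and $\Gamma(x,r)\ge r$; (ii) $\Gamma(x,r)=0$ iff $r=0$; (iii) $\Gamma(x,\cdot)$ is monotone increasing; (iv) $\lim_{r\to0}\Gamma(x,r)=0$. Norms and metrics: for $w\in W(X)$ with $|w|=l+1$ and a match $\theta$ on $\{0,\dots,l\}$, define $N^\theta_\Gamma(w)$ by induction on $l$: if $l=0$ and $w=x$, $N^\theta_\Gamma(w)=d(e,x)$; if $l>0$ and $\theta(0)=k<l$, write $w=w_1^\frown w_2$ with $|w_1|=k+1$ and set $N^\theta_\Gamma(w)=N^{\theta\restriction\{0..k\}}_\Gamma(w_1)+N^{\theta\restriction\{k+1..l\}}_\Gamma(w_2)$; if $l>0$ and $\theta(0)=l$, write $w=x^{-1}w_1y$ with $x,y\in\overline X$ and set $N^\theta_\Gamma(w)=d(x,y)+\max\{\Gamma(x,N^{\theta_1}_\Gamma(w_1)),\Gamma(y,N^{\theta_1}_\Gamma(w_1))\}$ with $\theta_1=\theta\restriction\{1,\dots,l-1\}$ (and $N^{\theta_1}_\Gamma(w_1)=0$ if $w_1$ is empty). For $w\in F(X)$, $N_\Gamma(w)=\inf\{N^\theta_\Gamma(w^* ): w^*\in W(X),\ (w^* )'=w,\ \theta \text{ a match on }\{0,\dots,|w^*|-1\}\}$, and $\delta_\Gamma(u,v)=N_\Gamma(u^{-1}v)$, a left-invariant metric on $F(X)$. Scale of a group: for a topological group $G$ with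 compatible left-invariant metric $d_G$, $\Gamma_G(g,r)=\max\{r,\sup\{d_G(1_G,g^{-1}hg):d_G(1_G,h)\le r\}\}$. Baire space: $\mathcal N=\omega^\omega$ with metric $d(x,y)=\max\{2^{-n}:x(n)\ne y(n)\}$ ($d(x,x)=0$). *)

theory Defs
  imports "HOL-Analysis.Analysis" "HOL-Library.Extended_Real"
begin

datatype 'a letter = Gen 'a | Inv 'a | E

fun linv :: "'a letter \<Rightarrow> 'a letter" where
  "linv (Gen x) = Inv x"
| "linv (Inv x) = Gen x"
| "linv E = E"

definition irreducible :: "'a letter list \<Rightarrow> bool" where
  "irreducible w \<longleftrightarrow> w = [E] \<or>
     (w \<noteq> [] \<and> (\<forall>i<length w. w ! i \<noteq> E) \<and>
      (\<forall>i. Suc i < length w \<longrightarrow> w ! i \<noteq> linv (w ! Suc i)))"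

inductive red_step :: "'a letter list \<Rightarrow> 'a letter list \<Rightarrow> bool" where
  cancel: "red_step (u @ [x, linv x] @ v) (u @ [E] @ v)"
| dele: "u @ v \<noteq> [] \<Longrightarrow> red_step (u @ [E] @ v) (u @ v)"

definition reduced :: "'a letter list \<Rightarrow> 'a letter list" where
  "reduced w = (THE v. irreducible v \<and> red_step\<^sup>*\<^sup>* w v)"

definition FG :: "'a letter list set" where
  "FG = {w. irreducible w}"

definition fmult :: "'a letter list \<Rightarrow> 'a letter list \<Rightarrow> 'a letter list" where
  "fmult u v = reduced (u @ v)"

definition finv :: "'a letter list \<Rightarrow> 'a letter list" where
  "finv u = rev (map linv u)"

definition fone :: "'a letter list" where
  "fone = [E]"

fun ldist :: "('a \<Rightarrow> 'a \<Rightarrow> real) \<Rightarrow> 'a letter \<Rightarrow> 'a letter \<Rightarrow> real" where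
  "ldist d (Gen x) (Gen y) = d x y"
| "ldist d (Inv x) (Inv y) = d x y"
| "ldist d E E = 0"
| "ldist d _ _ = 1"

definition is_match :: "(nat \<Rightarrow> nat) \<Rightarrow> nat \<Rightarrow> nat \<Rightarrow> bool" where
  "is_match \<theta> m n \<longleftrightarrow> m \<le> n \<and> bij_betw \<theta> {m..n} {m..n} \<and>
     (\<forall>i\<in>{m..n}. \<theta> (\<theta> i) = i) \<and>
     \<not> (\<exists>i\<in>{m..n}. \<exists>j\<in>{m..n}. i < j \<and> j < \<theta> i \<and> \<theta> i < \<theta> j)"

definition is_scale :: "('a letter \<Rightarrow> real \<Rightarrow> real) \<Rightarrow> bool" where
  "is_scale \<Gamma> \<longleftrightarrow>
     (\<forall>r\<ge>0. \<Gamma> E r = r) \<and>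
     (\<forall>x. \<forall>r\<ge>0. \<Gamma> x r \<ge> r) \<and>
     (\<forall>x. \<forall>r\<ge>0. \<Gamma> x r = 0 \<longleftrightarrow> r = 0) \<and>
     (\<forall>x. mono_on {0..} (\<Gamma> x)) \<and>
     (\<forall>x. (\<Gamma> x \<longlongrightarrow> 0) (at_right 0))"

text \<open>\<open>NT d \<Gamma> \<theta> m w\<close> is N^theta_Gamma of the word w whose letters carry the
  indices m, ..., m + |w| - 1 (so the match theta is used on that index range).
  The value on the empty word is 0 (the convention for empty w_1).\<close>

function NT :: "('a \<Rightarrow> 'a \<Rightarrow> real) \<Rightarrow> ('a letter \<Rightarrow> real \<Rightarrow> real) \<Rightarrow> (nat \<Rightarrow> nat)
                 \<Rightarrow> nat \<Rightarrow> 'a letter list \<Rightarrow> real" where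
  "NT d \<Gamma> \<theta> m [] = 0"
| "NT d \<Gamma> \<theta> m [x] = ldist d E x"
| "NT d \<Gamma> \<theta> m (a # b # rest) =
     (let w = a # b # rest; l = length w - 1; k = \<theta> m in
      if k < m + l then
        NT d \<Gamma> \<theta> m (take (k - m + 1) w) + NT d \<Gamma> \<theta> (k + 1) (drop (k - m + 1) w)
      else
        (let x = linv a; y = last w; w1 = butlast (b # rest);
             n1 = NT d \<Gamma> \<theta> (m + 1) w1
         in ldist d x y + max (\<Gamma> x n1) (\<Gamma> y n1)))"
  by pat_completeness auto
termination
  by (relation "Wellfounded.measure (\<lambda>(_, _, _, _, w). length w)") (auto simp: min_def)

definition Nnorm :: "('a \<Rightarrow> 'a \<Rightarrow> real) \<Rightarrow> ('a letter \<Rightarrow> real \<Rightarrow> real)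
                      \<Rightarrow> 'a letter list \<Rightarrow> real" where
  "Nnorm d \<Gamma> w = Inf {NT d \<Gamma> \<theta> 0 ws | ws \<theta>. ws \<noteq> [] \<and> reduced ws = w \<and>
                                          is_match \<theta> 0 (length ws - 1)}"

definition delta :: "('a \<Rightarrow> 'a \<Rightarrow> real) \<Rightarrow> ('a letter \<Rightarrow> real \<Rightarrow> real)
                      \<Rightarrow> 'a letter list \<Rightarrow> 'a letter list \<Rightarrow> real" where
  "delta d \<Gamma> u v = Nnorm d \<Gamma> (fmult (finv u) v)"

definition group_scale :: "('a \<Rightarrow> 'a \<Rightarrow> real) \<Rightarrow> ('a letter \<Rightarrow> real \<Rightarrow> real)
                            \<Rightarrow> 'a letter list \<Rightarrow> real \<Rightarrow> ereal" where
  "group_scale d \<Gamma> g r = max (ereal r)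
     (SUP h \<in> {h \<in> FG. delta d \<Gamma> fone h \<le> r}.
        ereal (delta d \<Gamma> fone (fmult (fmult (finv g) h) g)))"

definition baire_dist :: "(nat \<Rightarrow> nat) \<Rightarrow> (nat \<Rightarrow> nat) \<Rightarrow> real" where
  "baire_dist x y = (if x = y then 0 else (1/2) ^ (LEAST n. x n \<noteq> y n))"

end

theory Submission
  imports Defs
begin

lemma linv_linv[simp]: "linv (linv x) = x"
  by (cases x) auto

lemma linv_E_iff[simp]: "linv x = E \<longleftrightarrow> x = E"
  by (cases x) auto

fun cns :: "'a letter \<Rightarrow> 'a letter list \<Rightarrow> 'a letter list" where
  "cns x [] = [x]"
| "cns x (y # ys) = (if y = linv x then ys else x # y # ys)"

definition fred :: "'a letter list \<Rightarrow> 'a letter list" where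
  "fred l = foldr cns l []"

fun nored :: "'a letter list \<Rightarrow> bool" where
  "nored [] = True"
| "nored [x] = True"
| "nored (x # y # ys) = (y \<noteq> linv x \<and> nored (y # ys))"

definition nf :: "'a letter list \<Rightarrow> 'a letter list" where
  "nf w = (let r = fred (filter (\<lambda>x. x \<noteq> E) w) in if r = [] then [E] else r)"

lemma nored_tl: "nored (x # L) \<Longrightarrow> nored L"
  by (cases L) auto

lemma nored_cns: "nored L \<Longrightarrow> nored (cns x L)"
  by (cases L) (auto dest: nored_tl)

lemma nored_fred: "nored (fred l)"
  unfolding fred_def by (induction l) (auto intro: nored_cns)

lemma cns_cancel: "nored L \<Longrightarrow> cns x (cns (linv x) L) = L"
proof (cases L)
  case (Cons y ys)
  assume n: "nored L"
  show ?thesis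
  proof (cases "y = x")
    case True
    then show ?thesis using n Cons by (cases ys) auto
  next
    case False
    then show ?thesis using Cons by auto
  qed
qed simp

lemma fred_cancel: "fred (a @ x # linv x # b) = fred (a @ b)"
proof -
  have "cns x (cns (linv x) (foldr cns b [])) = foldr cns b []"
    by (rule cns_cancel[OF nored_fred[unfolded fred_def]])
  then show ?thesis unfolding fred_def by simp
qed

lemma nf_step: "red_step u v \<Longrightarrow> nf u = nf v"
proof (induction rule: red_step.induct)
  case (cancel u x v)
  then show ?case
    by (cases "x = E") (simp_all add: nf_def fred_cancel)
next
  case (dele u v)
  then show ?case by (simp add: nf_def)
qed

lemma nf_steps: "red_step\<^sup>*\<^sup>* u v \<Longrightarrow> nf u = nf v"
  by (induction rule: rtranclp_induct) (auto simp: nf_step)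

lemma nored_iff: "nored L \<longleftrightarrow> (\<forall>i. Suc i < length L \<longrightarrow> L ! Suc i \<noteq> linv (L ! i))"
proof (induction L rule: nored.induct)
  case (3 x y ys)
  show ?case
  proof
    assume "nored (x # y # ys)"
    then show "\<forall>i. Suc i < length (x # y # ys) \<longrightarrow> (x # y # ys) ! Suc i \<noteq> linv ((x # y # ys) ! i)"
      using 3 by (auto simp: nth_Cons split: nat.splits)
  next
    assume h: "\<forall>i. Suc i < length (x # y # ys) \<longrightarrow> (x # y # ys) ! Suc i \<noteq> linv ((x # y # ys) ! i)"
    have "y \<noteq> linv x" using h[rule_format, of 0] by simp
    moreover have "\<forall>i. Suc i < length (y # ys) \<longrightarrow> (y # ys) ! Suc i \<noteq> linv ((y # ys) ! i)"
    proof (intro allI impI)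
      fix i assume "Suc i < length (y # ys)"
      then show "(y # ys) ! Suc i \<noteq> linv ((y # ys) ! i)" using h[rule_format, of "Suc i"] by simp
    qed
    then have "nored (y # ys)" using 3 by simp
    ultimately show "nored (x # y # ys)" by simp
  qed
qed auto

lemma fred_nored: "nored L \<Longrightarrow> fred L = L"
proof (induction L)
  case (Cons x L)
  then have "fred L = L" using nored_tl by blast
  then show ?case using Cons.prems by (cases L) (auto simp: fred_def)
qed (simp add: fred_def)

lemma nf_irr: "irreducible v \<Longrightarrow> nf v = v"
proof -
  assume irr: "irreducible v"
  show ?thesis
  proof (cases "v = [E]")
    case True then show ?thesis by (simp add: nf_def fred_def)
  next
    case False
    then have v: "v \<noteq> []" "\<forall>i<length v. v ! i \<noteq> E"
      "\<forall>i. Suc i < length v \<longrightarrow> v ! i \<noteq> linv (v ! Suc i)"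
      using irr unfolding irreducible_def by auto
    have f: "filter (\<lambda>x. x \<noteq> E) v = v"
      using v(2) by (auto simp: filter_id_conv in_set_conv_nth)
    have "nored v" unfolding nored_iff
    proof (intro allI impI)
      fix i assume "Suc i < length v"
      then have "v ! i \<noteq> linv (v ! Suc i)" using v(3) by blast
      then show "v ! Suc i \<noteq> linv (v ! i)" by auto
    qed
    then show ?thesis using fred_nored[OF \<open>nored v\<close>] f v(1) by (simp add: nf_def Let_def)
  qed
qed

lemma split2: "Suc i < length w \<Longrightarrow> w = take i w @ [w ! i, w ! Suc i] @ drop (Suc (Suc i)) w"
proof -
  assume a: "Suc i < length w"
  have d: "drop i w = w ! i # w ! Suc i # drop (Suc (Suc i)) w"
    using a by (simp add: Cons_nth_drop_Suc)
  show ?thesis using append_take_drop_id[of i w] d by simp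
qed

lemma split1: "i < length w \<Longrightarrow> w = take i w @ [w ! i] @ drop (Suc i) w"
  by (simp add: id_take_nth_drop)

lemma exists_irr: "w \<noteq> [] \<Longrightarrow> \<exists>v. irreducible v \<and> red_step\<^sup>*\<^sup>* w v"
proof (induction "length w" arbitrary: w rule: less_induct)
  case less
  show ?case
  proof (cases "irreducible w")
    case True then show ?thesis by blast
  next
    case False
    then have nE: "w \<noteq> [E]" and
      alt: "(\<exists>i<length w. w ! i = E) \<or> (\<exists>i. Suc i < length w \<and> w ! i = linv (w ! Suc i))"
      using less.prems unfolding irreducible_def by auto
    from alt show ?thesis
    proof
      assume "\<exists>i<length w. w ! i = E"
      then obtain i where i: "i < length w" "w ! i = E" by blast
      have len: "length w \<ge> 2"
      proof (rule ccontr)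
        assume "\<not> length w \<ge> 2"
        moreover have "length w \<noteq> 0" using less.prems by simp
        ultimately have "length w = 1" by linarith
        then have "w = [w ! 0]" by (cases w) auto
        then show False using i nE by (metis \<open>length w = 1\<close> less_one)
      qed
      let ?w' = "take i w @ drop (Suc i) w"
      have ne: "take i w @ drop (Suc i) w \<noteq> []" using i len by auto
      have st0: "red_step (take i w @ [E] @ drop (Suc i) w) ?w'" by (rule red_step.dele[OF ne])
      have eq: "w = take i w @ [E] @ drop (Suc i) w" using split1[OF i(1)] i(2) by simp
      have st: "red_step w ?w'" using st0 by (simp only: eq[symmetric])
      have "length ?w' < length w" "?w' \<noteq> []" using i len by auto
      then obtain v where "irreducible v" "red_step\<^sup>*\<^sup>* ?w' v" using less by blast
      then show ?thesis using st by (meson converse_rtranclp_into_rtranclp)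
    next
      assume "\<exists>i. Suc i < length w \<and> w ! i = linv (w ! Suc i)"
      then obtain i where i: "Suc i < length w" "w ! i = linv (w ! Suc i)" by blast
      let ?w' = "take i w @ [E] @ drop (Suc (Suc i)) w"
      have h: "w ! Suc i = linv (w ! i)" using i(2) by simp
      from split2[OF i(1)] have "w = take i w @ [w ! i, w ! Suc i] @ drop (Suc (Suc i)) w" .
      also have "\<dots> = take i w @ [w ! i, linv (w ! i)] @ drop (Suc (Suc i)) w"
        by (simp only: h)
      finally have eq: "w = take i w @ [w ! i, linv (w ! i)] @ drop (Suc (Suc i)) w" .
      have st: "red_step w ?w'"
        using red_step.cancel[of "take i w" "w ! i" "drop (Suc (Suc i)) w"] by (simp only: eq[symmetric])
      have "length ?w' < length w" "?w' \<noteq> []" using i by auto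
      then obtain v where "irreducible v" "red_step\<^sup>*\<^sup>* ?w' v" using less by blast
      then show ?thesis using st by (meson converse_rtranclp_into_rtranclp)
    qed
  qed
qed

lemma reduced_props:
  assumes "w \<noteq> []"
  shows "reduced w = nf w" "irreducible (reduced w)" "red_step\<^sup>*\<^sup>* w (reduced w)"
proof -
  obtain v where v: "irreducible v" "red_step\<^sup>*\<^sup>* w v" using exists_irr[OF assms] by blast
  have vw: "v = nf w"
  proof -
    have "nf v = v" by (rule nf_irr[OF v(1)])
    moreover have "nf w = nf v" by (rule nf_steps[OF v(2)])
    ultimately show ?thesis by simp
  qed
  have uniq: "v' = v" if "irreducible v' \<and> red_step\<^sup>*\<^sup>* w v'" for v'
  proof -
    have "nf v' = v'" using nf_irr that by blast
    moreover have "nf w = nf v'" using nf_steps that by blast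
    ultimately show ?thesis using vw by simp
  qed
  have r: "reduced w = v" unfolding reduced_def
  proof (rule the_equality)
    show "irreducible v \<and> red_step\<^sup>*\<^sup>* w v" using v by (rule conjI)
    show "\<And>v'. irreducible v' \<and> red_step\<^sup>*\<^sup>* w v' \<Longrightarrow> v' = v" by (rule uniq)
  qed
  show "reduced w = nf w" using r vw by simp
  show "irreducible (reduced w)" using r v by simp
  show "red_step\<^sup>*\<^sup>* w (reduced w)" using r v by simp
qed

lemma red_step_ctx: "red_step u v \<Longrightarrow> red_step (a @ u @ b) (a @ v @ b)"
proof (induction rule: red_step.induct)
  case (cancel u x v)
  then show ?case using red_step.cancel[of "a @ u" x "v @ b"] by simp
next
  case (dele u v)
  then have "(a @ u) @ (v @ b) \<noteq> []" by auto
  then show ?case using red_step.dele[of "a @ u" "v @ b"] by simp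
qed

lemma red_steps_ctx: "red_step\<^sup>*\<^sup>* u v \<Longrightarrow> red_step\<^sup>*\<^sup>* (a @ u @ b) (a @ v @ b)"
proof (induction rule: rtranclp_induct)
  case (step y z)
  show ?case by (rule rtranclp.rtrancl_into_rtrancl[OF step.IH red_step_ctx[OF step.hyps(2)]])
qed simp

lemma match_iff: "is_match \<theta> m n \<longleftrightarrow> m \<le> n \<and> (\<forall>i\<in>{m..n}. \<theta> i \<in> {m..n}) \<and>
     (\<forall>i\<in>{m..n}. \<theta> (\<theta> i) = i) \<and>
     \<not> (\<exists>i\<in>{m..n}. \<exists>j\<in>{m..n}. i < j \<and> j < \<theta> i \<and> \<theta> i < \<theta> j)"
proof
  assume "is_match \<theta> m n"
  then show "m \<le> n \<and> (\<forall>i\<in>{m..n}. \<theta> i \<in> {m..n}) \<and>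
     (\<forall>i\<in>{m..n}. \<theta> (\<theta> i) = i) \<and>
     \<not> (\<exists>i\<in>{m..n}. \<exists>j\<in>{m..n}. i < j \<and> j < \<theta> i \<and> \<theta> i < \<theta> j)"
    unfolding is_match_def using bij_betwE by blast
next
  assume h: "m \<le> n \<and> (\<forall>i\<in>{m..n}. \<theta> i \<in> {m..n}) \<and>
     (\<forall>i\<in>{m..n}. \<theta> (\<theta> i) = i) \<and>
     \<not> (\<exists>i\<in>{m..n}. \<exists>j\<in>{m..n}. i < j \<and> j < \<theta> i \<and> \<theta> i < \<theta> j)"
  have "bij_betw \<theta> {m..n} {m..n}"
    by (rule bij_betw_byWitness[where f'=\<theta>]) (use h in auto)
  then show "is_match \<theta> m n" unfolding is_match_def using h by blast
qed

lemma match_split: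
  assumes "is_match \<theta> m n" "\<theta> m < n"
  shows "is_match \<theta> m (\<theta> m)" "is_match \<theta> (Suc (\<theta> m)) n"
proof -
  let ?k = "\<theta> m"
  have mn: "m \<le> n" and into: "\<And>i. i \<in> {m..n} \<Longrightarrow> \<theta> i \<in> {m..n}"
    and inv: "\<And>i. i \<in> {m..n} \<Longrightarrow> \<theta> (\<theta> i) = i"
    and nc: "\<And>i j. i \<in> {m..n} \<Longrightarrow> j \<in> {m..n} \<Longrightarrow> i < j \<Longrightarrow> j < \<theta> i \<Longrightarrow> \<theta> i < \<theta> j \<Longrightarrow> False"
    using assms(1) unfolding match_iff by blast+
  have k: "m \<le> ?k" "?k \<le> n" using into[of m] mn by auto
  have A: "\<theta> i \<in> {m..?k}" if i: "i \<in> {m..?k}" for i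
  proof (rule ccontr)
    assume c: "\<theta> i \<notin> {m..?k}"
    have iin: "i \<in> {m..n}" using i k by auto
    have "\<theta> i \<in> {m..n}" using into[OF iin] .
    then have gt: "\<theta> i > ?k" using c by auto
    consider "i = m" | "i = ?k" | "m < i \<and> i < ?k" using i by fastforce
    then show False
    proof cases
      case 1 then show ?thesis using gt by simp
    next
      case 2 then have "\<theta> i = m" using inv[of m] mn by auto
      then show ?thesis using gt k by simp
    next
      case 3 then show ?thesis using nc[of m i] gt mn iin by auto
    qed
  qed
  have NC1: "\<not> (\<exists>i\<in>{m..?k}. \<exists>j\<in>{m..?k}. i < j \<and> j < \<theta> i \<and> \<theta> i < \<theta> j)"
  proof
    assume "\<exists>i\<in>{m..?k}. \<exists>j\<in>{m..?k}. i < j \<and> j < \<theta> i \<and> \<theta> i < \<theta> j"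
    then obtain i j where "i \<in> {m..?k}" "j \<in> {m..?k}" "i < j" "j < \<theta> i" "\<theta> i < \<theta> j" by blast
    then show False using nc[of i j] k by auto
  qed
  show "is_match \<theta> m ?k" unfolding match_iff
    using A k inv NC1 by auto
  have B: "\<theta> i \<in> {Suc ?k..n}" if i: "i \<in> {Suc ?k..n}" for i
  proof (rule ccontr)
    assume c: "\<theta> i \<notin> {Suc ?k..n}"
    have iin: "i \<in> {m..n}" using i k by auto
    have "\<theta> i \<in> {m..n}" using into[OF iin] .
    then have "\<theta> i \<in> {m..?k}" using c by auto
    then have "\<theta> (\<theta> i) \<in> {m..?k}" using A by blast
    then show False using inv[OF iin] i by auto
  qed
  have NC2: "\<not> (\<exists>i\<in>{Suc ?k..n}. \<exists>j\<in>{Suc ?k..n}. i < j \<and> j < \<theta> i \<and> \<theta> i < \<theta> j)"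
  proof
    assume "\<exists>i\<in>{Suc ?k..n}. \<exists>j\<in>{Suc ?k..n}. i < j \<and> j < \<theta> i \<and> \<theta> i < \<theta> j"
    then obtain i j where "i \<in> {Suc ?k..n}" "j \<in> {Suc ?k..n}" "i < j" "j < \<theta> i" "\<theta> i < \<theta> j" by blast
    then show False using nc[of i j] k by auto
  qed
  show "is_match \<theta> (Suc ?k) n" unfolding match_iff
    using B k assms(2) inv NC2 by auto
qed

lemma match_inner:
  assumes "is_match \<theta> m n" "\<theta> m = n" "Suc m \<le> n - 1"
  shows "is_match \<theta> (Suc m) (n - 1)"
proof -
  have mn: "m \<le> n" and into: "\<And>i. i \<in> {m..n} \<Longrightarrow> \<theta> i \<in> {m..n}"
    and inv: "\<And>i. i \<in> {m..n} \<Longrightarrow> \<theta> (\<theta> i) = i"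
    and nc: "\<And>i j. i \<in> {m..n} \<Longrightarrow> j \<in> {m..n} \<Longrightarrow> i < j \<Longrightarrow> j < \<theta> i \<Longrightarrow> \<theta> i < \<theta> j \<Longrightarrow> False"
    using assms(1) unfolding match_iff by blast+
  have tn: "\<theta> n = m" using inv[of m] assms(2) mn by auto
  have A: "\<theta> i \<in> {Suc m..n - 1}" if i: "i \<in> {Suc m..n - 1}" for i
  proof -
    have iin: "i \<in> {m..n}" using i by auto
    have "\<theta> i \<in> {m..n}" using into[OF iin] .
    moreover have "\<theta> i \<noteq> m" using inv[OF iin] assms(2) i by auto
    moreover have "\<theta> i \<noteq> n" using inv[OF iin] tn i by auto
    ultimately show ?thesis by auto
  qed
  have NC3: "\<not> (\<exists>i\<in>{Suc m..n - 1}. \<exists>j\<in>{Suc m..n - 1}. i < j \<and> j < \<theta> i \<and> \<theta> i < \<theta> j)"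
  proof
    assume "\<exists>i\<in>{Suc m..n - 1}. \<exists>j\<in>{Suc m..n - 1}. i < j \<and> j < \<theta> i \<and> \<theta> i < \<theta> j"
    then obtain i j where "i \<in> {Suc m..n - 1}" "j \<in> {Suc m..n - 1}" "i < j" "j < \<theta> i" "\<theta> i < \<theta> j" by blast
    moreover have "j \<le> n" using \<open>j \<in> {Suc m..n - 1}\<close> by auto
    ultimately show False using nc[of i j] by auto
  qed
  show ?thesis unfolding match_iff
    using A assms(3) inv NC3 by auto
qed

lemma NT_cons2:
  assumes "length w \<ge> 2"
  shows "NT d \<Gamma> \<theta> m w = (if \<theta> m < m + (length w - 1) then
      NT d \<Gamma> \<theta> m (take (\<theta> m - m + 1) w) + NT d \<Gamma> \<theta> (\<theta> m + 1) (drop (\<theta> m - m + 1) w)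
    else ldist d (linv (hd w)) (last w) +
      max (\<Gamma> (linv (hd w)) (NT d \<Gamma> \<theta> (m + 1) (butlast (tl w))))
          (\<Gamma> (last w) (NT d \<Gamma> \<theta> (m + 1) (butlast (tl w)))))"
proof -
  obtain a b rest where w: "w = a # b # rest" using assms
    by (metis One_nat_def Suc_1 Suc_le_length_iff)
  show ?thesis unfolding w by (simp add: Let_def)
qed

lemma NT_shift_step:
  assumes IH: "\<And>w' m' n'. length w' < length w \<Longrightarrow> is_match \<theta> m' n' \<Longrightarrow> length w' = n' - m' + 1
      \<Longrightarrow> (\<forall>i\<in>{m'..n'}. \<theta>' (Suc i) = Suc (\<theta> i)) \<Longrightarrow> NT d \<Gamma> \<theta>' (Suc m') w' = NT d \<Gamma> \<theta> m' w'"
    and M: "is_match \<theta> m n" and len: "length w = n - m + 1"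
    and ag: "\<forall>i\<in>{m..n}. \<theta>' (Suc i) = Suc (\<theta> i)"
  shows "NT d \<Gamma> \<theta>' (Suc m) w = NT d \<Gamma> \<theta> m w"
proof -
  have mn: "m \<le> n" using M by (simp add: is_match_def)
  have km: "\<theta> m \<in> {m..n}" using M mn unfolding match_iff by auto
  have tm: "\<theta>' (Suc m) = Suc (\<theta> m)" using ag mn by auto
  show ?thesis
  proof (cases "length w \<ge> 2")
    case False
    then have "length w = 1" using len by linarith
    then obtain x where "w = [x]" by (metis One_nat_def length_0_conv length_Suc_conv)
    then show ?thesis by simp
  next
    case True
    note e1 = NT_cons2[OF True, of d \<Gamma> \<theta>' "Suc m"]
    note e2 = NT_cons2[OF True, of d \<Gamma> \<theta> m]
    have L: "length w - 1 = n - m" using len by simp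
    show ?thesis
    proof (cases "\<theta> m < n")
      case True
      let ?k = "\<theta> m"
      have s1: "is_match \<theta> m ?k" "is_match \<theta> (Suc ?k) n" using match_split[OF M True] by auto
      have a: "NT d \<Gamma> \<theta>' (Suc m) (take (?k - m + 1) w) = NT d \<Gamma> \<theta> m (take (?k - m + 1) w)"
      proof (rule IH[OF _ s1(1)])
        show "length (take (?k - m + 1) w) < length w" using km True len by auto
        show "length (take (?k - m + 1) w) = ?k - m + 1" using km True len by auto
        show "\<forall>i\<in>{m..?k}. \<theta>' (Suc i) = Suc (\<theta> i)" using ag km by auto
      qed
      have b: "NT d \<Gamma> \<theta>' (Suc (Suc ?k)) (drop (?k - m + 1) w) = NT d \<Gamma> \<theta> (Suc ?k) (drop (?k - m + 1) w)"
      proof (rule IH[OF _ s1(2)])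
        show "length (drop (?k - m + 1) w) < length w" using km True len by auto
        show "length (drop (?k - m + 1) w) = n - Suc ?k + 1" using km True len by auto
        show "\<forall>i\<in>{Suc ?k..n}. \<theta>' (Suc i) = Suc (\<theta> i)" using ag km by auto
      qed
      have g1: "Suc (\<theta> m) < Suc m + (length w - 1)" "\<theta> m < m + (length w - 1)" using True L km by auto
      have g2: "Suc (\<theta> m) - Suc m + 1 = \<theta> m - m + 1" by simp
      show ?thesis unfolding e1 e2 tm using g1 a b by simp
    next
      case False
      then have kn: "\<theta> m = n" using km by auto
      have nt: "\<not> Suc (\<theta> m) < Suc m + (length w - 1)" "\<not> \<theta> m < m + (length w - 1)" using kn L mn by auto
      have c: "NT d \<Gamma> \<theta>' (Suc m + 1) (butlast (tl w)) = NT d \<Gamma> \<theta> (m + 1) (butlast (tl w))"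
      proof (cases "Suc m \<le> n - 1")
        case True
        have s: "is_match \<theta> (Suc m) (n - 1)" by (rule match_inner[OF M kn True])
        have "NT d \<Gamma> \<theta>' (Suc (Suc m)) (butlast (tl w)) = NT d \<Gamma> \<theta> (Suc m) (butlast (tl w))"
        proof (rule IH[OF _ s])
          show "length (butlast (tl w)) < length w" using len by auto
          show "length (butlast (tl w)) = n - 1 - Suc m + 1" using len True by auto
          show "\<forall>i\<in>{Suc m..n - 1}. \<theta>' (Suc i) = Suc (\<theta> i)" using ag by auto
        qed
        then show ?thesis by simp
      next
        case False
        then have "length (butlast (tl w)) = 0" using len mn by auto
        then have "butlast (tl w) = []" by blast
        then show ?thesis by simp
      qed
      show ?thesis unfolding e1 e2 tm using nt c by simp
    qed
  qed
qed

lemma NT_shift_aux: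
  "\<forall>(w::'a letter list) m n. length w < N \<longrightarrow> is_match \<theta> m n \<longrightarrow> length w = n - m + 1 \<longrightarrow>
     (\<forall>i\<in>{m..n}. \<theta>' (Suc i) = Suc (\<theta> i)) \<longrightarrow> NT d \<Gamma> \<theta>' (Suc m) w = NT d \<Gamma> \<theta> m w"
proof (induction N)
  case 0 then show ?case by simp
next
  case (Suc N)
  show ?case
  proof (intro allI impI)
    fix w :: "'a letter list" and m n :: nat
    assume a: "length w < Suc N" "is_match \<theta> m n" "length w = n - m + 1"
      "\<forall>i\<in>{m..n}. \<theta>' (Suc i) = Suc (\<theta> i)"
    show "NT d \<Gamma> \<theta>' (Suc m) w = NT d \<Gamma> \<theta> m w"
    proof (rule NT_shift_step[OF _ a(2,3,4)])
      fix w' :: "'a letter list" and m' n' :: nat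
      assume b: "length w' < length w" "is_match \<theta> m' n'" "length w' = n' - m' + 1"
        "\<forall>i\<in>{m'..n'}. \<theta>' (Suc i) = Suc (\<theta> i)"
      have "length w' < N" using a(1) b(1) by simp
      then show "NT d \<Gamma> \<theta>' (Suc m') w' = NT d \<Gamma> \<theta> m' w'" using Suc.IH b(2,3,4) by blast
    qed
  qed
qed

lemma NT_shift:
  fixes w :: "'a letter list"
  assumes "is_match \<theta> m n" "length w = n - m + 1" "\<forall>i\<in>{m..n}. \<theta>' (Suc i) = Suc (\<theta> i)"
  shows "NT d \<Gamma> \<theta>' (Suc m) w = NT d \<Gamma> \<theta> m w"
proof -
  have "length w < Suc (length w)" by simp
  then show ?thesis using NT_shift_aux[of "Suc (length w)" \<theta> \<theta>' d \<Gamma>] assms by blast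
qed

lemma ldist_nonneg: "\<forall>x y. d x y \<ge> 0 \<Longrightarrow> ldist d a b \<ge> 0"
  by (cases a; cases b) auto

lemma NT_nonneg:
  assumes d0: "\<forall>x y. d x y \<ge> 0" and g: "\<forall>x r. r \<ge> 0 \<longrightarrow> \<Gamma> x r \<ge> r"
  shows "NT d \<Gamma> \<theta> m w \<ge> 0"
proof (induction "length w" arbitrary: w m rule: less_induct)
  case less
  have IH: "\<And>w' m'. length w' < length w \<Longrightarrow> 0 \<le> NT d \<Gamma> \<theta> m' w'" using less by blast
  show ?case
  proof (cases "length w \<ge> 2")
    case False
    show ?thesis
    proof (cases w)
      case Nil then show ?thesis by simp
    next
      case (Cons x xs)
      then have "xs = []" using False by (cases xs) auto
      then show ?thesis using Cons ldist_nonneg[OF d0] by simp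
    qed
  next
    case True
    show ?thesis
    proof (cases "\<theta> m < m + (length w - 1)")
      case c: True
      have "0 \<le> NT d \<Gamma> \<theta> m (take (\<theta> m - m + 1) w)" by (rule IH) (use c True in auto)
      moreover have "0 \<le> NT d \<Gamma> \<theta> (\<theta> m + 1) (drop (\<theta> m - m + 1) w)" by (rule IH) (use True in auto)
      ultimately show ?thesis unfolding NT_cons2[OF True] using c by simp
    next
      case c: False
      let ?n = "NT d \<Gamma> \<theta> (m + 1) (butlast (tl w))"
      have n0: "0 \<le> ?n" by (rule IH) (use True in auto)
      have "?n \<le> \<Gamma> (linv (hd w)) ?n" using g n0 by blast
      then have "0 \<le> max (\<Gamma> (linv (hd w)) ?n) (\<Gamma> (last w) ?n)" using n0 by linarith
      moreover have "0 \<le> ldist d (linv (hd w)) (last w)" using ldist_nonneg[OF d0] .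
      ultimately show ?thesis unfolding NT_cons2[OF True] using c by simp
    qed
  qed
qed

lemma match_ext:
  assumes M: "is_match \<theta> 0 (L - 1)" and L: "L \<ge> 1"
  shows "is_match (\<lambda>i. if i = 0 then Suc L else if i = Suc L then 0 else Suc (\<theta> (i - 1))) 0 (Suc L)"
    (is "is_match ?t 0 (Suc L)")
proof -
  have into: "\<And>i. i \<in> {0..L - 1} \<Longrightarrow> \<theta> i \<in> {0..L - 1}"
    and inv: "\<And>i. i \<in> {0..L - 1} \<Longrightarrow> \<theta> (\<theta> i) = i"
    and nc: "\<And>i j. i \<in> {0..L - 1} \<Longrightarrow> j \<in> {0..L - 1} \<Longrightarrow> i < j \<Longrightarrow> j < \<theta> i \<Longrightarrow> \<theta> i < \<theta> j \<Longrightarrow> False"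
    using M unfolding match_iff by blast+
  have mid: "?t i = Suc (\<theta> (i - 1))" "?t i \<in> {1..L}" if "i \<in> {1..L}" for i
  proof -
    show "?t i = Suc (\<theta> (i - 1))" using that by auto
    have "i - 1 \<in> {0..L - 1}" using that by auto
    then have "\<theta> (i - 1) \<in> {0..L - 1}" by (rule into)
    then show "?t i \<in> {1..L}" using that L by auto
  qed
  have A: "\<forall>i\<in>{0..Suc L}. ?t i \<in> {0..Suc L}"
  proof
    fix i assume i: "i \<in> {0..Suc L}"
    consider "i = 0" | "i = Suc L" | "i \<in> {1..L}" using i by fastforce
    then show "?t i \<in> {0..Suc L}"
    proof cases
      case 3 then show ?thesis using mid(2)[OF 3] by auto
    qed auto
  qed
  have B: "\<forall>i\<in>{0..Suc L}. ?t (?t i) = i"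
  proof
    fix i assume i: "i \<in> {0..Suc L}"
    consider "i = 0" | "i = Suc L" | "i \<in> {1..L}" using i by fastforce
    then show "?t (?t i) = i"
    proof cases
      case 3
      have "?t (?t i) = Suc (\<theta> (?t i - 1))" using mid(1)[OF mid(2)[OF 3]] .
      also have "\<dots> = Suc (\<theta> (\<theta> (i - 1)))" using mid(1)[OF 3] by simp
      also have "\<dots> = i" using inv[of "i - 1"] 3 by auto
      finally show ?thesis .
    qed auto
  qed
  have C: "\<not> (\<exists>i\<in>{0..Suc L}. \<exists>j\<in>{0..Suc L}. i < j \<and> j < ?t i \<and> ?t i < ?t j)"
  proof
    assume "\<exists>i\<in>{0..Suc L}. \<exists>j\<in>{0..Suc L}. i < j \<and> j < ?t i \<and> ?t i < ?t j"
    then obtain i j where ij: "i \<in> {0..Suc L}" "j \<in> {0..Suc L}" "i < j" "j < ?t i" "?t i < ?t j" by blast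
    have "?t j \<le> Suc L" using A ij(2) by auto
    have i0: "i \<noteq> 0"
    proof
      assume "i = 0"
      then have "?t i = Suc L" by simp
      then show False using ij(5) \<open>?t j \<le> Suc L\<close> by linarith
    qed
    have iL: "i \<noteq> Suc L" using ij by auto
    have i1: "i \<in> {1..L}" using i0 iL ij(1) by auto
    have jL: "j \<noteq> Suc L" using ij mid[OF i1] by auto
    have j1: "j \<in> {1..L}" using ij(2,3) i1 jL by auto
    have "i - 1 < j - 1" "j - 1 < \<theta> (i - 1)" "\<theta> (i - 1) < \<theta> (j - 1)"
      using ij(3,4,5) mid(1)[OF i1] mid(1)[OF j1] i1 j1 by auto
    moreover have "i - 1 \<in> {0..L - 1}" "j - 1 \<in> {0..L - 1}" using i1 j1 by auto
    ultimately show False using nc by blast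
  qed
  show ?thesis unfolding match_iff using A B C by simp
qed

lemma baire_self: "ldist baire_dist x x = 0"
  by (cases x) (auto simp: baire_dist_def)

lemma baire_nonneg: "\<forall>x y. baire_dist x y \<ge> 0"
  by (simp add: baire_dist_def)

lemma NT_ext:
  assumes ne: "ws \<noteq> []" and M: "is_match \<theta> 0 (length ws - 1)"
  shows "NT baire_dist \<Gamma> (\<lambda>i. if i = 0 then Suc (length ws) else if i = Suc (length ws) then 0 else Suc (\<theta> (i - 1))) 0
           (linv w # ws @ [w]) = \<Gamma> w (NT baire_dist \<Gamma> \<theta> 0 ws)"
    (is "NT _ _ ?t 0 ?W = _")
proof -
  have len: "length ?W \<ge> 2" by simp
  have lw: "length ws \<ge> 1" using ne by (cases ws) auto
  have sh: "NT baire_dist \<Gamma> ?t (Suc 0) ws = NT baire_dist \<Gamma> \<theta> 0 ws"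
  proof (rule NT_shift[OF M])
    show "length ws = length ws - 1 - 0 + 1" using lw by simp
    show "\<forall>i\<in>{0..length ws - 1}. ?t (Suc i) = Suc (\<theta> i)"
    proof
      fix i assume "i \<in> {0..length ws - 1}"
      then have "i < length ws" using lw by auto
      then show "?t (Suc i) = Suc (\<theta> i)" by simp
    qed
  qed
  have g: "\<not> ?t 0 < 0 + (length ?W - 1)" by simp
  have hb: "hd ?W = linv w" "last ?W = w" "butlast (tl ?W) = ws" by simp_all
  show ?thesis unfolding NT_cons2[OF len] hb using sh g by (simp add: baire_self)
qed

lemma irr_ne: "irreducible v \<Longrightarrow> v \<noteq> []"
  unfolding irreducible_def by auto

lemma reduced_irr: "irreducible h \<Longrightarrow> reduced h = h"
  using reduced_props(1)[OF irr_ne] nf_irr by metis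

lemma delta_fone: "irreducible h \<Longrightarrow> delta d \<Gamma> fone h = Nnorm d \<Gamma> h"
proof -
  assume h: "irreducible h"
  have ne: "h \<noteq> []" using irr_ne[OF h] .
  have "red_step ([] @ [E] @ h) ([] @ h)" by (rule red_step.dele) (use ne in simp)
  then have "nf ([E] @ h) = nf h" using nf_step by fastforce
  then have "reduced ([E] @ h) = h" using reduced_props(1)[of "[E] @ h"] nf_irr[OF h] by simp
  then show ?thesis unfolding delta_def fmult_def finv_def fone_def by simp
qed

lemma target_eq:
  assumes h: "irreducible h" and ws: "ws \<noteq> []" "reduced ws = h"
  shows "reduced (linv w # ws @ [w]) = fmult (fmult (finv [w]) h) [w]"
proof -
  let ?R = "reduced ([linv w] @ h)"
  have Rs: "red_step\<^sup>*\<^sup>* ([linv w] @ h) ?R" by (rule reduced_props(3)) simp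
  have Rirr: "irreducible ?R" by (rule reduced_props(2)) simp
  have "fmult (fmult (finv [w]) h) [w] = reduced (?R @ [w])"
    unfolding fmult_def finv_def by simp
  also have "\<dots> = nf (?R @ [w])" by (rule reduced_props(1)) simp
  also have "\<dots> = nf ([] @ ([linv w] @ h) @ [w])"
    using nf_steps[OF red_steps_ctx[OF Rs, of "[]" "[w]"]] by simp
  also have "\<dots> = nf ([linv w] @ ws @ [w])"
    using nf_steps[OF red_steps_ctx[OF reduced_props(3)[OF ws(1)], of "[linv w]" "[w]"]] ws(2) by simp
  also have "\<dots> = reduced (linv w # ws @ [w])" using reduced_props(1)[of "linv w # ws @ [w]"] by simp
  finally show ?thesis by simp
qed

lemma match_id: "is_match id 0 n"
  unfolding match_iff by auto

theorem lemma3p3: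
  fixes \<Gamma> :: "(nat \<Rightarrow> nat) letter \<Rightarrow> real \<Rightarrow> real"
    and w :: "(nat \<Rightarrow> nat) letter" and r :: real
  assumes "is_scale \<Gamma>"
    and "\<And>x. continuous_on {0..} (\<Gamma> x)"
    and "r \<ge> 0"
  shows "group_scale baire_dist \<Gamma> [w] r \<le> ereal (\<Gamma> w r)"
proof -
  note sc = assms(1)[unfolded is_scale_def]
  have g: "\<forall>x r. r \<ge> 0 \<longrightarrow> \<Gamma> x r \<ge> r" using sc by blast
  have mono: "mono_on {0..} (\<Gamma> w)" using sc by blast
  define S where "S = (\<lambda>h. {NT baire_dist \<Gamma> \<theta> 0 ws | ws \<theta>. ws \<noteq> [] \<and> reduced ws = h \<and>
                                          is_match \<theta> 0 (length ws - 1)})"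
  have NN: "Nnorm baire_dist \<Gamma> h = Inf (S h)" for h unfolding Nnorm_def S_def by simp
  have bdd: "bdd_below (S h)" for h
    unfolding S_def bdd_below_def using NT_nonneg[OF baire_nonneg g] by blast
  have key: "Nnorm baire_dist \<Gamma> (fmult (fmult (finv [w]) h) [w]) \<le> \<Gamma> w r"
    if h: "irreducible h" "Nnorm baire_dist \<Gamma> h \<le> r" for h
  proof -
    let ?T = "fmult (fmult (finv [w]) h) [w]"
    have Sne: "S h \<noteq> {}"
    proof -
      have "NT baire_dist \<Gamma> id 0 h \<in> S h" unfolding S_def
        using irr_ne[OF h(1)] reduced_irr[OF h(1)] match_id by blast
      then show ?thesis by blast
    qed
    have eps: "Nnorm baire_dist \<Gamma> ?T \<le> \<Gamma> w (r + e)" if e: "e > 0" for e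
    proof -
      have "Inf (S h) < r + e" using h(2) e NN by simp
      then obtain s where s: "s \<in> S h" "s < r + e" using cInf_lessD[OF Sne] by blast
      then obtain ws \<theta> where ws: "s = NT baire_dist \<Gamma> \<theta> 0 ws" "ws \<noteq> []" "reduced ws = h"
        "is_match \<theta> 0 (length ws - 1)" unfolding S_def by blast
      define \<theta>' where "\<theta>' = (\<lambda>i. if i = 0 then Suc (length ws) else if i = Suc (length ws) then 0 else Suc (\<theta> (i - 1)))"
      have lw: "length ws \<ge> 1" using ws(2) by (cases ws) auto
      have M': "is_match \<theta>' 0 (length (linv w # ws @ [w]) - 1)"
        using match_ext[OF ws(4) lw] unfolding \<theta>'_def by simp
      have NTe: "NT baire_dist \<Gamma> \<theta>' 0 (linv w # ws @ [w]) = \<Gamma> w s"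
        unfolding \<theta>'_def ws(1) by (rule NT_ext[OF ws(2,4)])
      have mem: "\<Gamma> w s \<in> S ?T" unfolding S_def
        apply (rule CollectI, rule exI[of _ "linv w # ws @ [w]"], rule exI[of _ \<theta>'])
        using target_eq[OF h(1) ws(2,3), of w] M' NTe by simp
      have s0: "s \<ge> 0" unfolding ws(1) by (rule NT_nonneg[OF baire_nonneg g])
      have "Nnorm baire_dist \<Gamma> ?T \<le> \<Gamma> w s" unfolding NN by (rule cInf_lower[OF mem bdd])
      also have "\<dots> \<le> \<Gamma> w (r + e)" using mono_onD[OF mono] s0 s(2) assms(3) e by simp
      finally show ?thesis .
    qed
    have lim0: "(\<lambda>n. r + inverse (real (Suc n))) \<longlonglongrightarrow> r"
      using tendsto_add[OF tendsto_const LIMSEQ_inverse_real_of_nat, of r] by simp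
    have lim: "(\<lambda>n. \<Gamma> w (r + inverse (real (Suc n)))) \<longlonglongrightarrow> \<Gamma> w r"
      by (rule continuous_on_tendsto_compose[OF assms(2) lim0]) (use assms(3) in auto)
    show ?thesis
    proof (rule LIMSEQ_le_const[OF lim])
      show "\<exists>N. \<forall>n\<ge>N. Nnorm baire_dist \<Gamma> ?T \<le> \<Gamma> w (r + inverse (real (Suc n)))"
        using eps by auto
    qed
  qed
  have "(SUP h \<in> {h \<in> FG. delta baire_dist \<Gamma> fone h \<le> r}.
        ereal (delta baire_dist \<Gamma> fone (fmult (fmult (finv [w]) h) [w]))) \<le> ereal (\<Gamma> w r)"
  proof (rule SUP_least)
    fix h assume "h \<in> {h \<in> FG. delta baire_dist \<Gamma> fone h \<le> r}"
    then have h1: "irreducible h" and h2: "delta baire_dist \<Gamma> fone h \<le> r"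
      unfolding FG_def by auto
    have h: "irreducible h" "Nnorm baire_dist \<Gamma> h \<le> r"
      using h1 h2 delta_fone[OF h1, of baire_dist \<Gamma>] by auto
    have Tirr: "irreducible (fmult (fmult (finv [w]) h) [w])"
      unfolding fmult_def by (rule reduced_props(2)) simp
    show "ereal (delta baire_dist \<Gamma> fone (fmult (fmult (finv [w]) h) [w])) \<le> ereal (\<Gamma> w r)"
      using key[OF h] delta_fone[OF Tirr] by simp
  qed
  moreover have "r \<le> \<Gamma> w r" using g assms(3) by blast
  ultimately show ?thesis unfolding group_scale_def by simp
qed

end
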